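(* Let $\Lambda$ be a full-rank lattice in $\mathbb{R}^n$ with successive minima $\lambda_1,\dots,\lambda_n$. Then there exists a basis $\boldsymbol{v}^1,\dots,\boldsymbol{v}^n$ of $\Lambda$ such that (i) $|\boldsymbol{v}^s|_2\ll_n\lambda_s$ for $s=1,\dots,n$ (implied constant depending only on $n$); and (ii) $\mathfrak{I}(\boldsymbol{v}^s)\subseteq\mathfrak{I}(\boldsymbol{v}^{s+1})$ for $s=1,\dots,n-1$.
   Context: For $\boldsymbol{v}\in\mathbb{R}^n$, $\mathfrak{I}(\boldsymbol{v}):=\{h\in\{1,\dots,n\}:v_h\neq0\}$ is the set of indices of nonzero coordinates. $|\cdot|_2$ is the Euclidean norm. The $s$-th successive minimum of $\Lambda$ is the infimum of $r>0$ such that $\Lambda\cap B(\boldsymbol{0},r)$ contains $s$ linearly independent vectors. A basis of $\Lambda$ means linearly independent vectors generating $\Lambda$ as an abelian group. *)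

theory Defs
  imports "HOL-Analysis.Analysis"
begin

definition lattice_basis :: "(real ^ 'n) set \<Rightarrow> (nat \<Rightarrow> real ^ 'n) \<Rightarrow> bool" where
  "lattice_basis L v \<longleftrightarrow>
     card (v ` {1..CARD('n)}) = CARD('n) \<and> independent (v ` {1..CARD('n)}) \<and>
     L = {(\<Sum>s=1..CARD('n). of_int (c s) *\<^sub>R v s) | c :: nat \<Rightarrow> int. True}"

definition full_rank_lattice :: "(real ^ 'n) set \<Rightarrow> bool" where
  "full_rank_lattice L \<longleftrightarrow> (\<exists>v. lattice_basis L v)"

definition succ_min :: "(real ^ 'n) set \<Rightarrow> nat \<Rightarrow> real" where
  "succ_min L s = Inf {r. r > 0 \<and> (\<exists>S. S \<subseteq> L \<inter> ball 0 r \<and> independent S \<and> card S = s)}"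

definition nz_idx :: "real ^ 'n \<Rightarrow> 'n set" where
  "nz_idx x = {i. x $ i \<noteq> 0}"

end

theory Submission
  imports Defs
begin


definition coord :: "(nat \<Rightarrow> real ^ 'n) \<Rightarrow> real ^ 'n \<Rightarrow> nat \<Rightarrow> real" where
  "coord w x = (SOME c. x = (\<Sum>i=1..CARD('n). c i *\<^sub>R w i))"

definition nbasis :: "(nat \<Rightarrow> real ^ 'n) \<Rightarrow> bool" where
  "nbasis w \<longleftrightarrow> card (w ` {1..CARD('n)}) = CARD('n) \<and> independent (w ` {1..CARD('n)})"

lemma nbasis_inj:
  fixes w :: "nat \<Rightarrow> real ^ 'n"
  assumes "nbasis w" shows "inj_on w {1..CARD('n)}"
  using assms unfolding nbasis_def by (simp add: inj_on_iff_eq_card)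

lemma nbasis_span:
  fixes w :: "nat \<Rightarrow> real ^ 'n"
  assumes "nbasis w" shows "x \<in> span (w ` {1..CARD('n)})"
proof -
  have "UNIV \<subseteq> span (w ` {1..CARD('n)})"
    by (rule card_ge_dim_independent) (use assms in \<open>auto simp: nbasis_def\<close>)
  then show ?thesis by auto
qed

lemma nbasis_rep:
  fixes w :: "nat \<Rightarrow> real ^ 'n"
  assumes "nbasis w" shows "\<exists>c. x = (\<Sum>i=1..CARD('n). c i *\<^sub>R w i)"
proof -
  have "x \<in> span (w ` {1..CARD('n)})" by (rule nbasis_span[OF assms])
  then obtain u where u: "x = (\<Sum>v\<in>w ` {1..CARD('n)}. u v *\<^sub>R v)"
    using span_finite[of "w ` {1..CARD('n)}"] by auto
  also have "\<dots> = (\<Sum>i=1..CARD('n). u (w i) *\<^sub>R w i)"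
    by (subst sum.reindex[OF nbasis_inj[OF assms]]) simp
  finally show ?thesis by (rule exI[of _ "\<lambda>i. u (w i)"])
qed

lemma nbasis_unique:
  fixes w :: "nat \<Rightarrow> real ^ 'n"
  assumes "nbasis w" and eq: "(\<Sum>i=1..CARD('n). c i *\<^sub>R w i) = (\<Sum>i=1..CARD('n). d i *\<^sub>R w i)"
    and i: "i \<in> {1..CARD('n)}"
  shows "c i = d i"
proof -
  let ?I = "{1..CARD('n)}"
  have inj: "inj_on w ?I" by (rule nbasis_inj[OF assms(1)])
  define e where "e v = c (the_inv_into ?I w v) - d (the_inv_into ?I w v)" for v
  have "(\<Sum>v\<in>w ` ?I. e v *\<^sub>R v) = (\<Sum>j\<in>?I. e (w j) *\<^sub>R w j)"
    by (subst sum.reindex[OF inj]) simp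
  also have "\<dots> = (\<Sum>j\<in>?I. (c j - d j) *\<^sub>R w j)"
  proof (rule sum.cong)
    fix j assume "j \<in> ?I"
    then have "the_inv_into ?I w (w j) = j" by (rule the_inv_into_f_f[OF inj])
    then show "e (w j) *\<^sub>R w j = (c j - d j) *\<^sub>R w j" by (simp add: e_def)
  qed simp
  also have "\<dots> = 0" using eq by (simp add: scaleR_diff_left sum_subtractf)
  finally have "(\<Sum>v\<in>w ` ?I. e v *\<^sub>R v) = 0" .
  moreover have "independent (w ` ?I)" using assms(1) by (simp add: nbasis_def)
  ultimately have "e (w i) = 0" using i by (auto simp: independent_explicit)
  then show ?thesis using the_inv_into_f_f[OF inj i] by (simp add: e_def)
qed

lemma coord_sum:
  fixes w :: "nat \<Rightarrow> real ^ 'n"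
  assumes "nbasis w" shows "x = (\<Sum>i=1..CARD('n). coord w x i *\<^sub>R w i)"
  unfolding coord_def by (rule someI_ex[OF nbasis_rep[OF assms]])

lemma coord_eq:
  fixes w :: "nat \<Rightarrow> real ^ 'n"
  assumes "nbasis w" "x = (\<Sum>i=1..CARD('n). c i *\<^sub>R w i)" "i \<in> {1..CARD('n)}"
  shows "coord w x i = c i"
  using nbasis_unique[OF assms(1) _ assms(3), of "coord w x" c] coord_sum[OF assms(1), of x] assms(2)
  by simp

lemma coord_linear:
  fixes w :: "nat \<Rightarrow> real ^ 'n"
  assumes "nbasis w" "i \<in> {1..CARD('n)}"
  shows "linear (\<lambda>x. coord w x i)"
proof (rule linearI)
  fix x y :: "real ^ 'n"
  show "coord w (x + y) i = coord w x i + coord w y i"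
    by (rule coord_eq[OF assms(1) _ assms(2)])
      (subst coord_sum[OF assms(1), of x], subst coord_sum[OF assms(1), of y],
       simp add: scaleR_add_left sum.distrib)
next
  fix r :: real and x :: "real ^ 'n"
  show "coord w (r *\<^sub>R x) i = r *\<^sub>R coord w x i"
    by (simp, rule coord_eq[OF assms(1) _ assms(2)])
      (subst coord_sum[OF assms(1), of x], simp add: scaleR_sum_right)
qed

lemma coord_basis:
  fixes w :: "nat \<Rightarrow> real ^ 'n"
  assumes "nbasis w" "i \<in> {1..CARD('n)}" "j \<in> {1..CARD('n)}"
  shows "coord w (w j) i = (if i = j then 1 else 0)"
proof (rule coord_eq[OF assms(1) _ assms(2)])
  show "w j = (\<Sum>i = 1..CARD('n). (if i = j then 1 else 0) *\<^sub>R w i)"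
  proof -
    have "(\<Sum>i = 1..CARD('n). (if i = j then 1 else 0) *\<^sub>R w i) = (\<Sum>i = 1..CARD('n). if i = j then w i else 0)"
      by (rule sum.cong) auto
    also have "\<dots> = w j" using assms(3) by (simp add: sum.delta)
    finally show ?thesis by simp
  qed
qed

lemma coord_bounded:
  fixes w :: "nat \<Rightarrow> real ^ 'n"
  assumes "nbasis w"
  shows "\<exists>K>0. \<forall>x i. i \<in> {1..CARD('n)} \<longrightarrow> \<bar>coord w x i\<bar> \<le> K * norm x"
proof -
  have "\<exists>K>0. \<forall>x. \<bar>coord w x i\<bar> \<le> K * norm x" if i: "i \<in> {1..CARD('n)}" for i
  proof -
    have "bounded_linear (\<lambda>x. coord w x i)"
      using coord_linear[OF assms i] by (simp add: linear_conv_bounded_linear)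
    then obtain K where "K > 0" "\<And>x. norm (coord w x i) \<le> norm x * K"
      using bounded_linear.pos_bounded by blast
    then show ?thesis by (metis mult.commute real_norm_def)
  qed
  then obtain K where K: "\<And>i. i \<in> {1..CARD('n)} \<Longrightarrow> K i > 0 \<and> (\<forall>x. \<bar>coord w x i\<bar> \<le> K i * norm x)"
    by metis
  define K0 where "K0 = (\<Sum>i=1..CARD('n). K i)"
  have "K0 > 0" unfolding K0_def
    by (rule sum_pos) (use K in auto)
  moreover have "\<bar>coord w x i\<bar> \<le> K0 * norm x" if "i \<in> {1..CARD('n)}" for x i
  proof -
    have "K i \<le> K0" unfolding K0_def
      by (rule member_le_sum) (use K that in \<open>auto intro: less_imp_le\<close>)
    then have "K i * norm x \<le> K0 * norm x" by (simp add: mult_right_mono)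
    then show ?thesis using K that by (meson order_trans)
  qed
  ultimately show ?thesis by blast
qed



lemma lb_nbasis:
  fixes b :: "nat \<Rightarrow> real ^ 'n"
  shows "lattice_basis L b \<Longrightarrow> nbasis b"
  by (simp add: lattice_basis_def nbasis_def)

lemma lb_mem_iff:
  fixes b :: "nat \<Rightarrow> real ^ 'n"
  assumes "lattice_basis L b"
  shows "x \<in> L \<longleftrightarrow> (\<exists>c::nat\<Rightarrow>int. x = (\<Sum>s=1..CARD('n). of_int (c s) *\<^sub>R b s))"
  using assms by (auto simp: lattice_basis_def)

lemma lb_add:
  fixes b :: "nat \<Rightarrow> real ^ 'n"
  assumes "lattice_basis L b" "x \<in> L" "y \<in> L"
  shows "x + y \<in> L"
proof -
  obtain c d where "x = (\<Sum>s=1..CARD('n). of_int (c s) *\<^sub>R b s)" "y = (\<Sum>s=1..CARD('n). of_int (d s) *\<^sub>R b s)"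
    using assms(2,3) lb_mem_iff[OF assms(1)] by blast
  then have "x + y = (\<Sum>s=1..CARD('n). of_int ((\<lambda>s. c s + d s) s) *\<^sub>R b s)"
    by (simp add: sum.distrib scaleR_add_left)
  then show ?thesis unfolding lb_mem_iff[OF assms(1)] by (intro exI[of _ "\<lambda>s. c s + d s"])
qed

lemma lb_scale:
  fixes b :: "nat \<Rightarrow> real ^ 'n"
  assumes "lattice_basis L b" "x \<in> L"
  shows "of_int k *\<^sub>R x \<in> L"
proof -
  obtain c where "x = (\<Sum>s=1..CARD('n). of_int (c s) *\<^sub>R b s)"
    using assms(2) lb_mem_iff[OF assms(1)] by blast
  then have "of_int k *\<^sub>R x = (\<Sum>s=1..CARD('n). of_int ((\<lambda>s. k * c s) s) *\<^sub>R b s)"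
    by (simp add: scaleR_sum_right)
  then show ?thesis unfolding lb_mem_iff[OF assms(1)] by (intro exI[of _ "\<lambda>s. k * c s"])
qed

lemma lb_zero:
  fixes b :: "nat \<Rightarrow> real ^ 'n"
  assumes "lattice_basis L b" shows "0 \<in> L"
proof -
  have "(0::real^'n) = (\<Sum>s=1..CARD('n). of_int ((\<lambda>s. 0) s) *\<^sub>R b s)" by simp
  then show ?thesis unfolding lb_mem_iff[OF assms(1)] by (intro exI[of _ "\<lambda>s. 0"])
qed

lemma lb_diff:
  fixes b :: "nat \<Rightarrow> real ^ 'n"
  assumes "lattice_basis L b" "x \<in> L" "y \<in> L"
  shows "x - y \<in> L"
  using lb_add[OF assms(1,2) lb_scale[OF assms(1,3), of "-1"]] by simp

lemma lb_sum:
  fixes b :: "nat \<Rightarrow> real ^ 'n"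
  assumes "lattice_basis L b" "finite J" "\<And>i. i \<in> J \<Longrightarrow> x i \<in> L"
  shows "(\<Sum>i\<in>J. of_int (k i) *\<^sub>R x i) \<in> L"
  using assms(2,3)
proof (induction J rule: finite_induct)
  case empty then show ?case using lb_zero[OF assms(1)] by simp
next
  case (insert a F)
  then show ?case by (simp add: lb_add[OF assms(1)] lb_scale[OF assms(1)])
qed

lemma lb_basis_mem:
  fixes b :: "nat \<Rightarrow> real ^ 'n"
  assumes "lattice_basis L b" "j \<in> {1..CARD('n)}"
  shows "b j \<in> L"
proof -
  have "(\<Sum>s=1..CARD('n). of_int ((\<lambda>s. if s = j then 1 else 0) s) *\<^sub>R b s) = (\<Sum>s=1..CARD('n). if s = j then b s else 0)"
    by (rule sum.cong) auto
  also have "\<dots> = b j" using assms(2) by (simp add: sum.delta)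
  finally have eq: "(\<Sum>s=1..CARD('n). of_int ((\<lambda>s. if s = j then 1 else 0) s) *\<^sub>R b s) = b j" .
  show ?thesis unfolding lb_mem_iff[OF assms(1)] by (rule exI[of _ "\<lambda>s. if s = j then 1 else 0"], rule eq[symmetric])
qed

lemma lb_discrete:
  fixes b :: "nat \<Rightarrow> real ^ 'n"
  assumes "lattice_basis L b"
  shows "\<exists>e>0. \<forall>x\<in>L. x \<noteq> 0 \<longrightarrow> e \<le> norm x"
proof -
  have nb: "nbasis b" using lb_nbasis[OF assms] .
  obtain K where K: "K > 0" "\<And>x i. i \<in> {1..CARD('n)} \<Longrightarrow> \<bar>coord b x i\<bar> \<le> K * norm x"
    using coord_bounded[OF nb] by blast
  have "1 / K \<le> norm x" if "x \<in> L" "x \<noteq> 0" for x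
  proof -
    have "\<exists>c::nat\<Rightarrow>int. x = (\<Sum>s=1..CARD('n). of_int (c s) *\<^sub>R b s)"
      using that(1) lb_mem_iff[OF assms(1)] by simp
    then obtain c where c: "x = (\<Sum>s=1..CARD('n). of_int (c s) *\<^sub>R b s)" by (elim exE)
    have "\<exists>i\<in>{1..CARD('n)}. c i \<noteq> 0"
    proof (rule ccontr)
      assume "\<not> ?thesis"
      then have "x = 0" unfolding c by (intro sum.neutral) auto
      then show False using that by simp
    qed
    then obtain i where i: "i \<in> {1..CARD('n)}" "c i \<noteq> 0" by blast
    have "coord b x i = of_int (c i)" by (rule coord_eq[OF nb c i(1)])
    moreover have "1 \<le> \<bar>c i\<bar>" using i(2) by presburger
    ultimately have "1 \<le> \<bar>coord b x i\<bar>" by (metis of_int_1_le_iff of_int_abs)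
    then have "1 \<le> K * norm x" using K(2)[OF i(1), of x] by (rule order_trans)
    then show ?thesis using K(1) by (simp add: field_simps)
  qed
  moreover have "1 / K > 0" using K(1) by simp
  ultimately show ?thesis by blast
qed

lemma lb_finite:
  fixes b :: "nat \<Rightarrow> real ^ 'n"
  assumes "lattice_basis L b"
  shows "finite (L \<inter> cball 0 R)"
proof -
  have nb: "nbasis b" using lb_nbasis[OF assms] .
  obtain K where K: "K > 0" "\<And>x i. i \<in> {1..CARD('n)} \<Longrightarrow> \<bar>coord b x i\<bar> \<le> K * norm x"
    using coord_bounded[OF nb] by blast
  define N where "N = \<lceil>K * R\<rceil>"
  define f where "f c = (\<Sum>s=1..CARD('n). of_int (c s) *\<^sub>R b s)" for c :: "nat \<Rightarrow> int"
  have "L \<inter> cball 0 R \<subseteq> f ` (PiE {1..CARD('n)} (\<lambda>_. {-N..N}))"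
  proof
    fix x assume x: "x \<in> L \<inter> cball 0 R"
    have "\<exists>c::nat\<Rightarrow>int. x = (\<Sum>s=1..CARD('n). of_int (c s) *\<^sub>R b s)"
      using x lb_mem_iff[OF assms(1)] by simp
    then obtain c where c: "x = (\<Sum>s=1..CARD('n). of_int (c s) *\<^sub>R b s)" by (elim exE)
    have "x = f (restrict c {1..CARD('n)})" unfolding c f_def
      by (rule sum.cong) auto
    moreover have "restrict c {1..CARD('n)} \<in> PiE {1..CARD('n)} (\<lambda>_. {-N..N})"
    proof -
      have "c i \<in> {-N..N}" if i: "i \<in> {1..CARD('n)}" for i
      proof -
        have "coord b x i = of_int (c i)" by (rule coord_eq[OF nb c i])
        moreover have "K * norm x \<le> K * R" using x K(1) by (simp add: mult_left_mono)
        ultimately have "\<bar>of_int (c i)\<bar> \<le> K * R" using K(2)[OF i, of x] by linarith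
        then have "\<bar>c i\<bar> \<le> N" unfolding N_def by linarith
        then show ?thesis by auto
      qed
      then show ?thesis by auto
    qed
    ultimately show "x \<in> f ` (PiE {1..CARD('n)} (\<lambda>_. {-N..N}))" by blast
  qed
  moreover have "finite (f ` (PiE {1..CARD('n)} (\<lambda>_. {-N..N})))"
    by (intro finite_imageI finite_PiE) auto
  ultimately show ?thesis by (rule finite_subset)
qed



definition Rset :: "(real ^ 'n) set \<Rightarrow> nat \<Rightarrow> real set" where
  "Rset L s = {r. r > 0 \<and> (\<exists>S. S \<subseteq> L \<inter> ball 0 r \<and> independent S \<and> card S = s)}"

lemma succ_min_Rset: "succ_min L s = Inf (Rset L s)"
  by (simp add: succ_min_def Rset_def)

lemma Rset_nonempty:
  fixes b :: "nat \<Rightarrow> real ^ 'n"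
  assumes "lattice_basis L b" "s \<le> CARD('n)"
  shows "Rset L s \<noteq> {}"
proof -
  have nb: "nbasis b" by (rule lb_nbasis[OF assms(1)])
  define r where "r = 1 + (\<Sum>j=1..CARD('n). norm (b j))"
  have sub: "{1..s} \<subseteq> {1..CARD('n)}" using assms(2) by auto
  have "b ` {1..s} \<subseteq> L \<inter> ball 0 r"
  proof
    fix x assume "x \<in> b ` {1..s}"
    then obtain j where j: "j \<in> {1..CARD('n)}" "x = b j" using sub by blast
    have "norm (b j) \<le> (\<Sum>j=1..CARD('n). norm (b j))"
      by (rule member_le_sum) (use j in auto)
    then show "x \<in> L \<inter> ball 0 r" using j lb_basis_mem[OF assms(1) j(1)] by (simp add: r_def)
  qed
  moreover have "independent (b ` {1..s})"
    by (rule independent_mono[of "b ` {1..CARD('n)}"]) (use nb sub in \<open>auto simp: nbasis_def\<close>)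
  moreover have "card (b ` {1..s}) = s"
    using card_image[OF inj_on_subset[OF nbasis_inj[OF nb] sub]] by simp
  moreover have "r > 0" unfolding r_def by (simp add: add_pos_nonneg sum_nonneg)
  ultimately have "r \<in> Rset L s" unfolding Rset_def by blast
  then show ?thesis by blast
qed

lemma Rset_lower:
  fixes b :: "nat \<Rightarrow> real ^ 'n"
  assumes "lattice_basis L b"
  obtains e where "e > 0" "\<And>s r. s \<ge> 1 \<Longrightarrow> r \<in> Rset L s \<Longrightarrow> e \<le> r"
proof -
  obtain e where e: "e > 0" "\<And>x. x \<in> L \<Longrightarrow> x \<noteq> 0 \<Longrightarrow> e \<le> norm x"
    using lb_discrete[OF assms] by blast
  have "e \<le> r" if hs: "s \<ge> 1" and hr: "r \<in> Rset L s" for s r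
  proof -
    obtain S where S: "S \<subseteq> L \<inter> ball 0 r" "independent S" "card S = s"
      using hr unfolding Rset_def by blast
    have "S \<noteq> {}" using S(3) hs by auto
    then obtain x where x: "x \<in> S" by blast
    have "x \<noteq> 0" using S(2) x dependent_zero by blast
    then have "e \<le> norm x" using e(2) S(1) x by blast
    moreover have "norm x < r" using S(1) x by auto
    ultimately show ?thesis by simp
  qed
  then show ?thesis using e(1) that by blast
qed

lemma succ_min_props:
  fixes b :: "nat \<Rightarrow> real ^ 'n"
  assumes "lattice_basis L b"
  shows "\<And>s. s \<in> {1..CARD('n)} \<Longrightarrow> succ_min L s > 0"
    and "\<And>i s. 1 \<le> i \<Longrightarrow> i \<le> s \<Longrightarrow> s \<le> CARD('n) \<Longrightarrow> succ_min L i \<le> succ_min L s"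
    and "\<And>s. s \<in> {1..CARD('n)} \<Longrightarrow> \<exists>S. S \<subseteq> L \<inter> ball 0 (2 * succ_min L s) \<and> independent S \<and> card S = s"
proof -
  obtain e where e: "e > 0" "\<And>s r. s \<ge> 1 \<Longrightarrow> r \<in> Rset L s \<Longrightarrow> e \<le> r"
    using Rset_lower[OF assms] by blast
  show pos: "succ_min L s > 0" if "s \<in> {1..CARD('n)}" for s
  proof -
    have "e \<le> Inf (Rset L s)"
      by (rule cInf_greatest) (use Rset_nonempty[OF assms] e that in auto)
    then show ?thesis using e(1) by (simp add: succ_min_Rset)
  qed
  show "succ_min L i \<le> succ_min L s" if hi: "1 \<le> i" "i \<le> s" "s \<le> CARD('n)" for i s
  proof -
    have "Rset L s \<subseteq> Rset L i"
    proof
      fix r assume "r \<in> Rset L s"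
      then obtain S where S: "r > 0" "S \<subseteq> L \<inter> ball 0 r" "independent S" "card S = s"
        unfolding Rset_def by blast
      obtain T where T: "T \<subseteq> S" "card T = i"
        using obtain_subset_with_card_n[of i S] S(4) hi(2) by metis
      have "independent T" using independent_mono[OF S(3) T(1)] .
      then show "r \<in> Rset L i" unfolding Rset_def using S T by blast
    qed
    moreover have "bdd_below (Rset L i)" using e hi unfolding bdd_below_def by blast
    ultimately show ?thesis unfolding succ_min_Rset
      by (intro cInf_superset_mono Rset_nonempty[OF assms]) (use hi in auto)
  qed
  show "\<exists>S. S \<subseteq> L \<inter> ball 0 (2 * succ_min L s) \<and> independent S \<and> card S = s"
    if hs: "s \<in> {1..CARD('n)}" for s
  proof -
    have "Inf (Rset L s) < 2 * succ_min L s" using pos[OF hs] by (simp add: succ_min_Rset)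
    moreover have "s \<le> CARD('n)" using hs by simp
    ultimately obtain r where r: "r \<in> Rset L s" "r < 2 * succ_min L s"
      using cInf_lessD[OF Rset_nonempty[OF assms]] by blast
    then obtain S where S: "S \<subseteq> L \<inter> ball 0 r" "independent S" "card S = s"
      unfolding Rset_def by blast
    have "ball (0::real^'n) r \<subseteq> ball 0 (2 * succ_min L s)" using r(2) by auto
    then show ?thesis using S by blast
  qed
qed



lemma choose_u:
  fixes b :: "nat \<Rightarrow> real ^ 'n"
  assumes lb: "lattice_basis L b"
  shows "k \<le> CARD('n) \<Longrightarrow> \<exists>u. inj_on u {1..k} \<and> independent (u ` {1..k}) \<and>
            (\<forall>s\<in>{1..k}. u s \<in> L \<and> norm (u s) < 2 * succ_min L s)"
proof (induction k)
  case 0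
  show ?case by (intro exI[of _ "\<lambda>_. 0"]) (simp add: independent_empty)
next
  case (Suc k)
  have "k \<le> CARD('n)" using Suc.prems by simp
  then obtain u where u: "inj_on u {1..k}" "independent (u ` {1..k})"
      "\<forall>s\<in>{1..k}. u s \<in> L \<and> norm (u s) < 2 * succ_min L s" using Suc.IH by blast
  have "Suc k \<in> {1..CARD('n)}" using Suc.prems by simp
  then obtain S where S: "S \<subseteq> L \<inter> ball 0 (2 * succ_min L (Suc k))" "independent S" "card S = Suc k"
    using succ_min_props(3)[OF lb] by blast
  have "\<not> S \<subseteq> span (u ` {1..k})"
  proof
    assume "S \<subseteq> span (u ` {1..k})"
    then have "card S \<le> dim (span (u ` {1..k}))" by (rule independent_card_le_dim[OF _ S(2)])
    also have "\<dots> = card (u ` {1..k})" by (rule dim_span_eq_card_independent[OF u(2)])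
    also have "\<dots> = k" using card_image[OF u(1)] by simp
    finally show False using S(3) by simp
  qed
  then obtain y where y: "y \<in> S" "y \<notin> span (u ` {1..k})" by blast
  define u' where "u' = u(Suc k := y)"
  have ins: "{1..Suc k} = insert (Suc k) {1..k}" by (simp add: atLeastAtMostSuc_conv)
  have eqimg: "u' ` {1..k} = u ` {1..k}" by (intro image_cong) (auto simp: u'_def)
  have u'k: "u' (Suc k) = y" by (simp add: u'_def)
  have img: "u' ` {1..Suc k} = insert y (u ` {1..k})"
    unfolding ins image_insert eqimg u'k ..
  have ynot: "y \<notin> u ` {1..k}" using y(2) span_base[of y "u ` {1..k}"] by auto
  have inj': "inj_on u' {1..Suc k}"
  proof -
    have "inj_on u' {1..k}" using u(1) inj_on_cong[of "{1..k}" u' u] by (auto simp: u'_def)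
    moreover have "u' (Suc k) \<notin> u' ` {1..k}" using ynot unfolding eqimg u'k .
    ultimately show ?thesis unfolding ins by (simp add: inj_on_insert)
  qed
  have ind': "independent (u' ` {1..Suc k})"
    unfolding img by (rule independent_insertI[OF y(2) u(2)])
  have P': "\<forall>s\<in>{1..Suc k}. u' s \<in> L \<and> norm (u' s) < 2 * succ_min L s"
  proof
    fix s assume s: "s \<in> {1..Suc k}"
    show "u' s \<in> L \<and> norm (u' s) < 2 * succ_min L s"
    proof (cases "s = Suc k")
      case True then show ?thesis using S(1) y(1) u'k by auto
    next
      case False
      then have "s \<in> {1..k}" "u' s = u s" using s by (auto simp: u'_def)
      then show ?thesis using u(3) by simp
    qed
  qed
  show ?case by (rule exI[of _ u'], intro conjI inj' ind' P')
qed

lemma choose_u_full: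
  fixes b :: "nat \<Rightarrow> real ^ 'n"
  assumes lb: "lattice_basis L b"
  obtains u where "nbasis u" "\<And>s. s \<in> {1..CARD('n)} \<Longrightarrow> u s \<in> L"
    "\<And>s. s \<in> {1..CARD('n)} \<Longrightarrow> norm (u s) < 2 * succ_min L s"
proof -
  obtain u where u: "inj_on u {1..CARD('n)}" "independent (u ` {1..CARD('n)})"
      "\<forall>s\<in>{1..CARD('n)}. u s \<in> L \<and> norm (u s) < 2 * succ_min L s"
    using choose_u[OF lb order_refl] by blast
  have "nbasis u" unfolding nbasis_def using u card_image[OF u(1)] by simp
  then show ?thesis using that u(3) by blast
qed

lemma coord_add:
  fixes w :: "nat \<Rightarrow> real ^ 'n"
  shows "nbasis w \<Longrightarrow> i \<in> {1..CARD('n)} \<Longrightarrow> coord w (x + y) i = coord w x i + coord w y i"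
  using linear_add[OF coord_linear] by blast

lemma coord_diff:
  fixes w :: "nat \<Rightarrow> real ^ 'n"
  shows "nbasis w \<Longrightarrow> i \<in> {1..CARD('n)} \<Longrightarrow> coord w (x - y) i = coord w x i - coord w y i"
  using linear_diff[OF coord_linear] by blast

lemma coord_scale:
  fixes w :: "nat \<Rightarrow> real ^ 'n"
  shows "nbasis w \<Longrightarrow> i \<in> {1..CARD('n)} \<Longrightarrow> coord w (r *\<^sub>R x) i = r * coord w x i"
  using linear_scale[OF coord_linear] by fastforce

lemma coord_sumJ:
  fixes w :: "nat \<Rightarrow> real ^ 'n"
  shows "nbasis w \<Longrightarrow> i \<in> {1..CARD('n)} \<Longrightarrow> coord w (\<Sum>j\<in>J. g j) i = (\<Sum>j\<in>J. coord w (g j) i)"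
  using linear_sum[OF coord_linear, of w i g J] by (simp add: o_def)

lemma box_finite:
  fixes b u :: "nat \<Rightarrow> real ^ 'n"
  assumes lb: "lattice_basis L b" and nb: "nbasis u"
  shows "finite {x\<in>L. \<forall>i\<in>{1..CARD('n)}. 0 \<le> coord u x i \<and> coord u x i \<le> 1}"
proof -
  let ?R = "\<Sum>i=1..CARD('n). norm (u i)"
  have "{x\<in>L. \<forall>i\<in>{1..CARD('n)}. 0 \<le> coord u x i \<and> coord u x i \<le> 1} \<subseteq> L \<inter> cball 0 ?R"
  proof
    fix x assume x: "x \<in> {x\<in>L. \<forall>i\<in>{1..CARD('n)}. 0 \<le> coord u x i \<and> coord u x i \<le> 1}"
    have "norm x = norm (\<Sum>i=1..CARD('n). coord u x i *\<^sub>R u i)"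
      using coord_sum[OF nb, of x] by simp
    also have "\<dots> \<le> (\<Sum>i=1..CARD('n). norm (coord u x i *\<^sub>R u i))" by (rule norm_sum)
    also have "\<dots> \<le> ?R"
    proof (rule sum_mono)
      fix i assume i: "i \<in> {1..CARD('n)}"
      have "norm (coord u x i *\<^sub>R u i) = \<bar>coord u x i\<bar> * norm (u i)" by simp
      also have "\<dots> \<le> 1 * norm (u i)"
        by (rule mult_right_mono) (use x i in auto)
      finally show "norm (coord u x i *\<^sub>R u i) \<le> norm (u i)" by simp
    qed
    finally show "x \<in> L \<inter> cball 0 ?R" using x by auto
  qed
  then show ?thesis using lb_finite[OF lb] finite_subset by blast
qed

definition supp :: "(nat \<Rightarrow> real ^ 'n) \<Rightarrow> nat \<Rightarrow> real ^ 'n \<Rightarrow> bool" where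
  "supp w s x \<longleftrightarrow> (\<forall>i\<in>{1..CARD('n)}. s < i \<longrightarrow> coord w x i = 0)"

definition Gs :: "(real ^ 'n) set \<Rightarrow> (nat \<Rightarrow> real ^ 'n) \<Rightarrow> nat \<Rightarrow> real set" where
  "Gs L w s = {coord w x s | x. x \<in> L \<and> supp w s x}"

lemma Gs_closed:
  fixes b u :: "nat \<Rightarrow> real ^ 'n"
  assumes lb: "lattice_basis L b" and nb: "nbasis u" and s: "s \<in> {1..CARD('n)}"
    and g: "g \<in> Gs L u s" and h: "h \<in> Gs L u s"
  shows "g - of_int k * h \<in> Gs L u s"
proof -
  obtain x where x: "x \<in> L" "supp u s x" "g = coord u x s" using g unfolding Gs_def by blast
  obtain y where y: "y \<in> L" "supp u s y" "h = coord u y s" using h unfolding Gs_def by blast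
  define z where "z = x - of_int k *\<^sub>R y"
  have "z \<in> L" unfolding z_def by (rule lb_diff[OF lb x(1) lb_scale[OF lb y(1)]])
  moreover have "supp u s z" using x(2) y(2)
    by (auto simp: supp_def z_def coord_diff[OF nb] coord_scale[OF nb])
  moreover have "coord u z s = g - of_int k * h"
    using s by (simp add: z_def coord_diff[OF nb] coord_scale[OF nb] x(3) y(3))
  ultimately have "\<exists>z. g - of_int k * h = coord u z s \<and> z \<in> L \<and> supp u s z" by metis
  then show ?thesis unfolding Gs_def by simp
qed

lemma one_in_Gs:
  fixes b u :: "nat \<Rightarrow> real ^ 'n"
  assumes nb: "nbasis u" and s: "s \<in> {1..CARD('n)}" and uL: "u s \<in> L"
  shows "1 \<in> Gs L u s"
proof -
  have "supp u s (u s)" using s by (auto simp: supp_def coord_basis[OF nb])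
  moreover have "coord u (u s) s = 1" using s by (simp add: coord_basis[OF nb])
  ultimately show ?thesis using uL unfolding Gs_def by force
qed

lemma Gs_gen:
  fixes b u :: "nat \<Rightarrow> real ^ 'n"
  assumes lb: "lattice_basis L b" and nb: "nbasis u" and s: "s \<in> {1..CARD('n)}"
    and uL: "\<And>s. s \<in> {1..CARD('n)} \<Longrightarrow> u s \<in> L"
  shows "\<exists>t. t > 0 \<and> t \<le> 1 \<and> t \<in> Gs L u s \<and> (\<forall>g\<in>Gs L u s. \<exists>k::int. g = of_int k * t)"
proof -
  let ?F = "Gs L u s \<inter> {0<..1}"
  let ?B = "{x\<in>L. \<forall>i\<in>{1..CARD('n)}. 0 \<le> coord u x i \<and> coord u x i \<le> 1}"
  have one: "1 \<in> ?F" using one_in_Gs[OF nb s uL[OF s]] by simp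
  have "?F \<subseteq> (\<lambda>x. coord u x s) ` ?B"
  proof
    fix g assume g: "g \<in> ?F"
    then obtain x where x: "x \<in> L" "supp u s x" "g = coord u x s" unfolding Gs_def by blast
    define x' where "x' = x - (\<Sum>i\<in>{1..<s}. of_int \<lfloor>coord u x i\<rfloor> *\<^sub>R u i)"
    have "x' \<in> L" unfolding x'_def
      by (rule lb_diff[OF lb x(1) lb_sum[OF lb]]) (use uL s in auto)
    have cx': "coord u x' j = coord u x j - (if j < s then of_int \<lfloor>coord u x j\<rfloor> else 0)"
      if j: "j \<in> {1..CARD('n)}" for j
    proof -
      have "coord u x' j = coord u x j - (\<Sum>i\<in>{1..<s}. of_int \<lfloor>coord u x i\<rfloor> * coord u (u i) j)"
        unfolding x'_def using j s
        by (simp add: coord_diff[OF nb] coord_sumJ[OF nb] coord_scale[OF nb])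
      also have "(\<Sum>i\<in>{1..<s}. of_int \<lfloor>coord u x i\<rfloor> * coord u (u i) j) =
                 (\<Sum>i\<in>{1..<s}. if i = j then of_int \<lfloor>coord u x i\<rfloor> else 0)"
        by (rule sum.cong) (use j s in \<open>auto simp: coord_basis[OF nb]\<close>)
      also have "\<dots> = (if j < s then of_int \<lfloor>coord u x j\<rfloor> else 0)"
        using j by (simp add: sum.delta')
      finally show ?thesis .
    qed
    have "x' \<in> ?B"
    proof -
      have "0 \<le> coord u x' j \<and> coord u x' j \<le> 1" if j: "j \<in> {1..CARD('n)}" for j
      proof (cases "j < s")
        case True
        then show ?thesis using cx'[OF j]
          by (simp add: of_int_floor_le) linarith
      next
        case False
        show ?thesis
        proof (cases "j = s")
          case True then show ?thesis using cx'[OF j] g x(3) by auto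
        next
          case False
          then have "s < j" using \<open>\<not> j < s\<close> by simp
          then show ?thesis using cx'[OF j] x(2) j by (auto simp: supp_def)
        qed
      qed
      then show ?thesis using \<open>x' \<in> L\<close> by blast
    qed
    moreover have "coord u x' s = g" using cx'[OF s] x(3) by simp
    ultimately show "g \<in> (\<lambda>x. coord u x s) ` ?B" by force
  qed
  then have finF: "finite ?F" using box_finite[OF lb nb] finite_subset by blast
  define t where "t = Min ?F"
  have tF: "t \<in> ?F" unfolding t_def using finF one by (intro Min_in) auto
  have tmin: "t \<le> g" if "g \<in> ?F" for g unfolding t_def using finF that by simp
  have "\<exists>k::int. g = of_int k * t" if g: "g \<in> Gs L u s" for g
  proof -
    define k where "k = \<lfloor>g / t\<rfloor>"
    define r where "r = g - of_int k * t"
    have tpos: "t > 0" using tF by auto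
    have rG: "r \<in> Gs L u s" unfolding r_def using Gs_closed[OF lb nb s g] tF by blast
    have "of_int k \<le> g / t" "g / t < of_int k + 1" unfolding k_def by linarith+
    then have r0: "0 \<le> r" "r < t" using tpos unfolding r_def by (auto simp: field_simps)
    have "r = 0"
    proof (rule ccontr)
      assume "r \<noteq> 0"
      then have "r \<in> ?F" using rG r0 tF by auto
      then show False using tmin r0 by fastforce
    qed
    then show ?thesis unfolding r_def by auto
  qed
  then show ?thesis using tF by auto
qed



lemma nz_choice:
  fixes p q :: "real ^ 'n"
  shows "\<exists>m::nat. m \<le> CARD('n) \<and> nz_idx p \<subseteq> nz_idx (q + real m *\<^sub>R p)"
proof -
  define Bad where "Bad = {m\<in>{0..CARD('n)}. \<exists>h\<in>nz_idx p. q $ h + real m * p $ h = 0}"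
  have "real ` Bad \<subseteq> (\<lambda>h. - q $ h / p $ h) ` nz_idx p"
  proof
    fix r assume "r \<in> real ` Bad"
    then obtain m h where mh: "r = real m" "h \<in> nz_idx p" "q $ h + real m * p $ h = 0"
      unfolding Bad_def by blast
    then have "p $ h \<noteq> 0" by (simp add: nz_idx_def)
    then have "real m = - q $ h / p $ h" using mh(3) by (simp add: field_simps)
    then show "r \<in> (\<lambda>h. - q $ h / p $ h) ` nz_idx p" using mh by blast
  qed
  then have "card (real ` Bad) \<le> card ((\<lambda>h. - q $ h / p $ h) ` nz_idx p)"
    by (rule card_mono[rotated]) simp
  also have "\<dots> \<le> card (nz_idx p)" by (rule card_image_le) simp
  also have "\<dots> \<le> CARD('n)" by (rule card_mono) auto
  moreover have "card (real ` Bad) = card Bad" by (rule card_image) (simp add: inj_on_def)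
  ultimately have cB: "card Bad \<le> CARD('n)" by linarith
  have "\<not> {0..CARD('n)} \<subseteq> Bad"
  proof
    assume "{0..CARD('n)} \<subseteq> Bad"
    moreover have "finite Bad" unfolding Bad_def by simp
    ultimately have "card {0..CARD('n)} \<le> card Bad" by (rule card_mono[rotated])
    then show False using cB by simp
  qed
  then obtain m where m: "m \<in> {0..CARD('n)}" "m \<notin> Bad" by blast
  have "nz_idx p \<subseteq> nz_idx (q + real m *\<^sub>R p)"
  proof
    fix h assume h: "h \<in> nz_idx p"
    then have "q $ h + real m * p $ h \<noteq> 0" using m unfolding Bad_def by blast
    then show "h \<in> nz_idx (q + real m *\<^sub>R p)" by (simp add: nz_idx_def)
  qed
  then show ?thesis using m(1) by auto
qed

definition Hv :: "(real ^ 'n) set \<Rightarrow> (nat \<Rightarrow> real ^ 'n) \<Rightarrow> (nat \<Rightarrow> real) \<Rightarrow> nat \<Rightarrow> (nat \<Rightarrow> real ^ 'n) \<Rightarrow> bool" where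
  "Hv L u t j v \<longleftrightarrow> (\<forall>i\<in>{1..j}. v i \<in> L \<and> supp u i (v i) \<and> coord u (v i) i = t i)"

lemma supp0:
  fixes u :: "nat \<Rightarrow> real ^ 'n"
  assumes nb: "nbasis u" and "supp u 0 z"
  shows "z = 0"
proof -
  have "z = (\<Sum>i=1..CARD('n). coord u z i *\<^sub>R u i)" by (rule coord_sum[OF nb])
  also have "\<dots> = 0" using assms(2) by (intro sum.neutral) (auto simp: supp_def)
  finally show ?thesis .
qed

lemma ins_Suc: "{1..Suc j} = insert (Suc j) {1..j}"
  by (simp add: atLeastAtMostSuc_conv)

lemma real_span:
  fixes u v :: "nat \<Rightarrow> real ^ 'n"
  assumes nb: "nbasis u" and tpos: "\<And>s. s \<in> {1..CARD('n)} \<Longrightarrow> t s > 0"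
  shows "j \<le> CARD('n) \<Longrightarrow> Hv L u t j v \<Longrightarrow> supp u j z \<Longrightarrow> \<exists>r. z = (\<Sum>i=1..j. r i *\<^sub>R v i)"
proof (induction j arbitrary: z)
  case 0
  then show ?case using supp0[OF nb] by simp
next
  case (Suc j)
  let ?s = "Suc j"
  have s: "?s \<in> {1..CARD('n)}" using Suc.prems by simp
  have vs: "v ?s \<in> L" "supp u ?s (v ?s)" "coord u (v ?s) ?s = t ?s"
    using Suc.prems(2) by (auto simp: Hv_def)
  define c where "c = coord u z ?s / t ?s"
  define z' where "z' = z - c *\<^sub>R v ?s"
  have "supp u j z'" unfolding supp_def
  proof (intro ballI impI)
    fix i assume i: "i \<in> {1..CARD('n)}" "j < i"
    show "coord u z' i = 0"
    proof (cases "i = ?s")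
      case True
      then show ?thesis using tpos[OF s] vs(3)
        by (simp add: z'_def c_def coord_diff[OF nb s] coord_scale[OF nb s])
    next
      case False
      then have "?s < i" using i by simp
      then have "coord u z i = 0" "coord u (v ?s) i = 0"
        using Suc.prems(3) vs(2) i(1) by (auto simp: supp_def)
      then show ?thesis by (simp add: z'_def coord_diff[OF nb i(1)] coord_scale[OF nb i(1)])
    qed
  qed
  moreover have "Hv L u t j v" using Suc.prems(2) by (auto simp: Hv_def)
  moreover have "j \<le> CARD('n)" using Suc.prems(1) by simp
  ultimately obtain r where r: "z' = (\<Sum>i=1..j. r i *\<^sub>R v i)" using Suc.IH by blast
  define r' where "r' = r(?s := c)"
  have "(\<Sum>i=1..?s. r' i *\<^sub>R v i) = c *\<^sub>R v ?s + (\<Sum>i=1..j. r' i *\<^sub>R v i)"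
    unfolding ins_Suc by (simp add: r'_def)
  also have "(\<Sum>i=1..j. r' i *\<^sub>R v i) = (\<Sum>i=1..j. r i *\<^sub>R v i)"
    by (rule sum.cong) (auto simp: r'_def)
  also have "c *\<^sub>R v ?s + (\<Sum>i=1..j. r i *\<^sub>R v i) = c *\<^sub>R v ?s + z'" by (simp only: r)
  also have "\<dots> = z" by (simp add: z'_def)
  finally have eq: "(\<Sum>i=1..?s. r' i *\<^sub>R v i) = z" .
  show ?case by (rule exI[of _ r'], rule eq[symmetric])
qed

lemma int_span:
  fixes b u v :: "nat \<Rightarrow> real ^ 'n"
  assumes lb: "lattice_basis L b" and nb: "nbasis u" and tpos: "\<And>s. s \<in> {1..CARD('n)} \<Longrightarrow> t s > 0"
    and tG: "\<And>s g. s \<in> {1..CARD('n)} \<Longrightarrow> g \<in> Gs L u s \<Longrightarrow> \<exists>k::int. g = of_int k * t s"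
  shows "j \<le> CARD('n) \<Longrightarrow> Hv L u t j v \<Longrightarrow> z \<in> L \<Longrightarrow> supp u j z \<Longrightarrow> \<exists>c::nat\<Rightarrow>int. z = (\<Sum>i=1..j. of_int (c i) *\<^sub>R v i)"
proof (induction j arbitrary: z)
  case 0
  then show ?case using supp0[OF nb] by simp
next
  case (Suc j)
  let ?s = "Suc j"
  have s: "?s \<in> {1..CARD('n)}" using Suc.prems by simp
  have vs: "v ?s \<in> L" "supp u ?s (v ?s)" "coord u (v ?s) ?s = t ?s"
    using Suc.prems(2) by (auto simp: Hv_def)
  have "coord u z ?s \<in> Gs L u ?s" using Suc.prems(3,4) unfolding Gs_def by blast
  then obtain c where c: "coord u z ?s = of_int c * t ?s" using tG[OF s] by blast
  define z' where "z' = z - of_int c *\<^sub>R v ?s"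
  have "z' \<in> L" unfolding z'_def by (rule lb_diff[OF lb Suc.prems(3) lb_scale[OF lb vs(1)]])
  have "supp u j z'" unfolding supp_def
  proof (intro ballI impI)
    fix i assume i: "i \<in> {1..CARD('n)}" "j < i"
    show "coord u z' i = 0"
    proof (cases "i = ?s")
      case True
      then show ?thesis using tpos[OF s] vs(3) c
        by (simp add: z'_def coord_diff[OF nb s] coord_scale[OF nb s])
    next
      case False
      then have "?s < i" using i by simp
      then have "coord u z i = 0" "coord u (v ?s) i = 0"
        using Suc.prems(4) vs(2) i(1) by (auto simp: supp_def)
      then show ?thesis by (simp add: z'_def coord_diff[OF nb i(1)] coord_scale[OF nb i(1)])
    qed
  qed
  moreover have "Hv L u t j v" using Suc.prems(2) by (auto simp: Hv_def)
  moreover have "j \<le> CARD('n)" using Suc.prems(1) by simp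
  ultimately obtain r where r: "z' = (\<Sum>i=1..j. of_int (r i) *\<^sub>R v i)"
    using Suc.IH \<open>z' \<in> L\<close> by blast
  define r' where "r' = r(?s := c)"
  have "(\<Sum>i=1..?s. of_int (r' i) *\<^sub>R v i) = of_int c *\<^sub>R v ?s + (\<Sum>i=1..j. of_int (r' i) *\<^sub>R v i)"
    unfolding ins_Suc by (simp add: r'_def)
  also have "(\<Sum>i=1..j. of_int (r' i) *\<^sub>R v i) = (\<Sum>i=1..j. of_int (r i) *\<^sub>R v i)"
    by (rule sum.cong) (auto simp: r'_def)
  also have "of_int c *\<^sub>R v ?s + (\<Sum>i=1..j. of_int (r i) *\<^sub>R v i) = of_int c *\<^sub>R v ?s + z'" by (simp only: r)
  also have "\<dots> = z" by (simp add: z'_def)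
  finally have eq: "(\<Sum>i=1..?s. of_int (r' i) *\<^sub>R v i) = z" .
  show ?case by (rule exI[of _ r'], rule eq[symmetric])
qed



lemma construct:
  fixes b u :: "nat \<Rightarrow> real ^ 'n" and t :: "nat \<Rightarrow> real"
  assumes lb: "lattice_basis L b" and nb: "nbasis u"
    and uL: "\<And>s. s \<in> {1..CARD('n)} \<Longrightarrow> u s \<in> L"
    and un: "\<And>s. s \<in> {1..CARD('n)} \<Longrightarrow> norm (u s) < 2 * succ_min L s"
    and tpos: "\<And>s. s \<in> {1..CARD('n)} \<Longrightarrow> t s > 0"
    and tle: "\<And>s. s \<in> {1..CARD('n)} \<Longrightarrow> t s \<le> 1"
    and tin: "\<And>s. s \<in> {1..CARD('n)} \<Longrightarrow> t s \<in> Gs L u s"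
  defines "Kc \<equiv> 2 * real CARD('n) + 2"
  shows "k \<le> CARD('n) \<Longrightarrow> \<exists>v. Hv L u t k v \<and> (\<forall>s\<in>{1..k}. norm (v s) \<le> Kc ^ s * succ_min L s) \<and>
           (\<forall>s\<in>{1..<k}. nz_idx (v s) \<subseteq> nz_idx (v (Suc s)))"
proof (induction k)
  case 0
  show ?case by (intro exI[of _ "\<lambda>_. 0"]) (simp add: Hv_def)
next
  case (Suc k)
  let ?s = "Suc k"
  let ?l = "succ_min L ?s"
  have sI: "?s \<in> {1..CARD('n)}" using Suc.prems by simp
  have kn: "k \<le> CARD('n)" using Suc.prems by simp
  have Kc1: "1 \<le> Kc" unfolding Kc_def by simp
  have Pk1: "1 \<le> Kc ^ k" using Kc1 by simp
  have lpos: "?l > 0" by (rule succ_min_props(1)[OF lb sI])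
  obtain v where hv: "Hv L u t k v" and nv: "\<forall>i\<in>{1..k}. norm (v i) \<le> Kc ^ i * succ_min L i"
    and zv: "\<forall>i\<in>{1..<k}. nz_idx (v i) \<subseteq> nz_idx (v (Suc i))"
    using Suc.IH[OF kn] by blast
  have vprops: "v i \<in> L" "supp u i (v i)" "coord u (v i) i = t i" if "i \<in> {1..k}" for i
    using hv that by (auto simp: Hv_def)
  have vbound: "norm (v i) \<le> Kc ^ k * ?l" if i: "i \<in> {1..k}" for i
  proof -
    have iI: "i \<in> {1..CARD('n)}" using i kn by simp
    have li: "0 < succ_min L i" by (rule succ_min_props(1)[OF lb iI])
    have "Kc ^ i \<le> Kc ^ k" using i Kc1 by (intro power_increasing) auto
    then have "Kc ^ i * succ_min L i \<le> Kc ^ k * succ_min L i"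
      using li by (intro mult_right_mono) auto
    also have "\<dots> \<le> Kc ^ k * ?l"
      using succ_min_props(2)[OF lb, of i ?s] i Suc.prems Pk1 by (intro mult_left_mono) auto
    finally show ?thesis using nv i by (meson order_trans)
  qed
  have vzero: "coord u (v i') i = 0" if "i' \<in> {1..k}" "i \<in> {1..CARD('n)}" "k < i" for i i'
    using vprops(2)[OF that(1)] that by (auto simp: supp_def)
  obtain x0 where x0: "x0 \<in> L" "supp u ?s x0" "coord u x0 ?s = t ?s"
    using tin[OF sI] unfolding Gs_def by auto
  define y where "y = x0 - t ?s *\<^sub>R u ?s"
  have sy: "supp u k y" unfolding supp_def
  proof (intro ballI impI)
    fix i assume i: "i \<in> {1..CARD('n)}" "k < i"
    show "coord u y i = 0"
    proof (cases "i = ?s")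
      case True
      then show ?thesis using x0(3) sI
        by (simp add: y_def coord_diff[OF nb sI] coord_scale[OF nb sI] coord_basis[OF nb sI sI])
    next
      case False
      then have "?s < i" using i by simp
      then show ?thesis using x0(2) i(1) sI
        by (simp add: supp_def y_def coord_diff[OF nb i(1)] coord_scale[OF nb i(1)] coord_basis[OF nb i(1) sI])
    qed
  qed
  obtain r where r: "y = (\<Sum>i=1..k. r i *\<^sub>R v i)"
    using real_span[OF nb tpos kn hv sy] by blast
  define z where "z = (\<Sum>i=1..k. of_int \<lfloor>r i\<rfloor> *\<^sub>R v i)"
  define x' where "x' = x0 - z"
  have zL: "z \<in> L" unfolding z_def by (rule lb_sum[OF lb]) (use vprops in auto)
  have x'L: "x' \<in> L" unfolding x'_def by (rule lb_diff[OF lb x0(1) zL])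
  have "(\<Sum>i=1..k. (r i - of_int \<lfloor>r i\<rfloor>) *\<^sub>R v i) = y - z"
    by (simp add: r z_def scaleR_diff_left sum_subtractf)
  then have x'eq: "x' = t ?s *\<^sub>R u ?s + (\<Sum>i=1..k. (r i - of_int \<lfloor>r i\<rfloor>) *\<^sub>R v i)"
    by (simp add: x'_def y_def algebra_simps)
  have "norm x' \<le> norm (t ?s *\<^sub>R u ?s) + norm (\<Sum>i=1..k. (r i - of_int \<lfloor>r i\<rfloor>) *\<^sub>R v i)"
    unfolding x'eq by (rule norm_triangle_ineq)
  also have "norm (t ?s *\<^sub>R u ?s) \<le> 2 * ?l"
  proof -
    have "norm (t ?s *\<^sub>R u ?s) = t ?s * norm (u ?s)" using tpos[OF sI] by simp
    also have "\<dots> \<le> 1 * norm (u ?s)" using tle[OF sI] by (intro mult_right_mono) auto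
    finally show ?thesis using un[OF sI] by simp
  qed
  also have "norm (\<Sum>i=1..k. (r i - of_int \<lfloor>r i\<rfloor>) *\<^sub>R v i) \<le> (\<Sum>i=1..k. norm ((r i - of_int \<lfloor>r i\<rfloor>) *\<^sub>R v i))"
    by (rule norm_sum)
  also have "\<dots> \<le> (\<Sum>i=1..k. Kc ^ k * ?l)"
  proof (rule sum_mono)
    fix i assume i: "i \<in> {1..k}"
    have "norm ((r i - of_int \<lfloor>r i\<rfloor>) *\<^sub>R v i) = \<bar>r i - of_int \<lfloor>r i\<rfloor>\<bar> * norm (v i)" by simp
    also have "\<dots> \<le> 1 * norm (v i)"
      by (intro mult_right_mono) (auto, linarith+)
    finally show "norm ((r i - of_int \<lfloor>r i\<rfloor>) *\<^sub>R v i) \<le> Kc ^ k * ?l" using vbound[OF i] by simp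
  qed
  also have "\<dots> = real k * (Kc ^ k * ?l)" by simp
  also have "\<dots> \<le> real CARD('n) * (Kc ^ k * ?l)"
    using kn Pk1 lpos by (intro mult_right_mono) auto
  finally have nx': "norm x' \<le> 2 * ?l + real CARD('n) * (Kc ^ k * ?l)" by simp
  have zc: "coord u z i = 0" if i: "i \<in> {1..CARD('n)}" "k < i" for i
  proof -
    have "coord u z i = (\<Sum>i'=1..k. of_int \<lfloor>r i'\<rfloor> * coord u (v i') i)"
      unfolding z_def using i by (simp add: coord_sumJ[OF nb] coord_scale[OF nb])
    also have "\<dots> = 0" using vzero i by (intro sum.neutral) auto
    finally show ?thesis .
  qed
  have x'c: "coord u x' i = coord u x0 i" if i: "i \<in> {1..CARD('n)}" "k < i" for i
    using zc[OF i] i by (simp add: x'_def coord_diff[OF nb])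
  obtain m :: nat where m: "m \<le> CARD('n)" "0 < k \<Longrightarrow> nz_idx (v k) \<subseteq> nz_idx (x' + real m *\<^sub>R v k)"
    "k = 0 \<Longrightarrow> m = 0"
  proof (cases "k = 0")
    case True then show ?thesis using that[of 0] by simp
  next
    case False
    obtain m where "m \<le> CARD('n)" "nz_idx (v k) \<subseteq> nz_idx (x' + real m *\<^sub>R v k)"
      using nz_choice by blast
    then show ?thesis using that[of m] False by blast
  qed
  define w where "w = x' + real m *\<^sub>R v k"
  have mvL: "real m *\<^sub>R v k \<in> L"
  proof (cases "k = 0")
    case True then show ?thesis using m(3) lb_zero[OF lb] by simp
  next
    case False
    then have "k \<in> {1..k}" by simp
    then show ?thesis using lb_scale[OF lb vprops(1), of k "int m"] by simp
  qed
  have mvc: "coord u (real m *\<^sub>R v k) i = 0" if i: "i \<in> {1..CARD('n)}" "k < i" for i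
  proof (cases "k = 0")
    case True then show ?thesis using m(3) coord_scale[OF nb i(1), of 0 "v k"] by simp
  next
    case False
    then have "k \<in> {1..k}" by simp
    then show ?thesis using vzero[of k i] i by (simp add: coord_scale[OF nb])
  qed
  have mvn: "norm (real m *\<^sub>R v k) \<le> real CARD('n) * (Kc ^ k * ?l)"
  proof (cases "k = 0")
    case True then show ?thesis using m(3) Pk1 lpos by simp
  next
    case False
    then have k1: "k \<in> {1..k}" by simp
    have "norm (real m *\<^sub>R v k) = real m * norm (v k)" by simp
    also have "\<dots> \<le> real CARD('n) * norm (v k)" using m(1) by (intro mult_right_mono) auto
    also have "\<dots> \<le> real CARD('n) * (Kc ^ k * ?l)" using vbound[OF k1] by (intro mult_left_mono) auto
    finally show ?thesis .
  qed
  have wL: "w \<in> L" unfolding w_def by (rule lb_add[OF lb x'L mvL])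
  have wc: "coord u w i = coord u x0 i" if i: "i \<in> {1..CARD('n)}" "k < i" for i
    using x'c[OF i] mvc[OF i] i by (simp add: w_def coord_add[OF nb])
  have wsupp: "supp u ?s w" using x0(2) wc by (auto simp: supp_def)
  have wcs: "coord u w ?s = t ?s" using wc[OF sI] x0(3) by simp
  have "norm w \<le> norm x' + norm (real m *\<^sub>R v k)" unfolding w_def by (rule norm_triangle_ineq)
  also have "\<dots> \<le> 2 * ?l + real CARD('n) * (Kc ^ k * ?l) + real CARD('n) * (Kc ^ k * ?l)"
    using nx' mvn by linarith
  also have "\<dots> \<le> Kc ^ ?s * ?l"
  proof -
    have "2 * ?l \<le> 2 * (Kc ^ k * ?l)" using Pk1 lpos by (intro mult_left_mono) auto
    moreover have "Kc ^ ?s * ?l = Kc * (Kc ^ k * ?l)" by simp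
    ultimately show ?thesis unfolding Kc_def by (simp add: algebra_simps)
  qed
  finally have wn: "norm w \<le> Kc ^ ?s * ?l" .
  define v' where "v' = v(?s := w)"
  have "Hv L u t ?s v'" unfolding Hv_def
  proof
    fix i assume i: "i \<in> {1..?s}"
    show "v' i \<in> L \<and> supp u i (v' i) \<and> coord u (v' i) i = t i"
    proof (cases "i = ?s")
      case True then show ?thesis using wL wsupp wcs by (simp add: v'_def)
    next
      case False then have "i \<in> {1..k}" using i by simp
      then show ?thesis using vprops[of i] False by (simp add: v'_def)
    qed
  qed
  moreover have "\<forall>i\<in>{1..?s}. norm (v' i) \<le> Kc ^ i * succ_min L i"
  proof
    fix i assume i: "i \<in> {1..?s}"
    show "norm (v' i) \<le> Kc ^ i * succ_min L i"
    proof (cases "i = ?s")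
      case True then show ?thesis using wn by (simp add: v'_def)
    next
      case False then have "i \<in> {1..k}" using i by simp
      then show ?thesis using nv False by (simp add: v'_def)
    qed
  qed
  moreover have "\<forall>i\<in>{1..<?s}. nz_idx (v' i) \<subseteq> nz_idx (v' (Suc i))"
  proof
    fix i assume i: "i \<in> {1..<?s}"
    show "nz_idx (v' i) \<subseteq> nz_idx (v' (Suc i))"
    proof (cases "i = k")
      case True
      then have "0 < k" using i by simp
      then show ?thesis using m(2) True by (simp add: v'_def w_def)
    next
      case False then have "i \<in> {1..<k}" using i by simp
      then show ?thesis using zv by (simp add: v'_def)
    qed
  qed
  ultimately show ?case by blast
qed



theorem lemma3p2:
  "\<exists>C :: real. C > 0 \<and> (\<forall>L :: (real ^ 'n) set. full_rank_lattice L \<longrightarrow>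
     (\<exists>v. lattice_basis L v \<and>
          (\<forall>s\<in>{1..CARD('n)}. norm (v s) \<le> C * succ_min L s) \<and>
          (\<forall>s\<in>{1..<CARD('n)}. nz_idx (v s) \<subseteq> nz_idx (v (s + 1)))))"
proof -
  define Kc where "Kc = 2 * real CARD('n) + 2"
  have Kc1: "1 \<le> Kc" unfolding Kc_def by simp
  have "\<exists>v. lattice_basis L v \<and>
          (\<forall>s\<in>{1..CARD('n)}. norm (v s) \<le> Kc ^ CARD('n) * succ_min L s) \<and>
          (\<forall>s\<in>{1..<CARD('n)}. nz_idx (v s) \<subseteq> nz_idx (v (s + 1)))"
    if fr: "full_rank_lattice L" for L :: "(real ^ 'n) set"
  proof -
    obtain b where lb: "lattice_basis L b" using fr unfolding full_rank_lattice_def by blast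
    obtain u where nb: "nbasis u" and uL: "\<And>s. s \<in> {1..CARD('n)} \<Longrightarrow> u s \<in> L"
      and un: "\<And>s. s \<in> {1..CARD('n)} \<Longrightarrow> norm (u s) < 2 * succ_min L s"
      using choose_u_full[OF lb] by blast
    have "\<forall>s\<in>{1..CARD('n)}. \<exists>t. t > 0 \<and> t \<le> 1 \<and> t \<in> Gs L u s \<and> (\<forall>g\<in>Gs L u s. \<exists>k::int. g = of_int k * t)"
      using Gs_gen[OF lb nb _ uL] by blast
    then obtain t where t: "\<And>s. s \<in> {1..CARD('n)} \<Longrightarrow> t s > 0 \<and> t s \<le> 1 \<and> t s \<in> Gs L u s \<and> (\<forall>g\<in>Gs L u s. \<exists>k::int. g = of_int k * t s)"
      by metis
    have tpos: "\<And>s. s \<in> {1..CARD('n)} \<Longrightarrow> t s > 0" using t by blast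
    have tle: "\<And>s. s \<in> {1..CARD('n)} \<Longrightarrow> t s \<le> 1" using t by blast
    have tin: "\<And>s. s \<in> {1..CARD('n)} \<Longrightarrow> t s \<in> Gs L u s" using t by blast
    have tG: "\<And>s g. s \<in> {1..CARD('n)} \<Longrightarrow> g \<in> Gs L u s \<Longrightarrow> \<exists>k::int. g = of_int k * t s" using t by blast
    obtain v where hv: "Hv L u t CARD('n) v"
      and nv: "\<forall>s\<in>{1..CARD('n)}. norm (v s) \<le> Kc ^ s * succ_min L s"
      and zv: "\<forall>s\<in>{1..<CARD('n)}. nz_idx (v s) \<subseteq> nz_idx (v (Suc s))"
      using construct[OF lb nb uL un tpos tle tin order_refl] unfolding Kc_def by blast
    have suppn: "supp u CARD('n) z" for z by (auto simp: supp_def)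
    let ?B = "v ` {1..CARD('n)}"
    have spanB: "UNIV \<subseteq> span ?B"
    proof
      fix z :: "real ^ 'n"
      obtain r where r: "z = (\<Sum>i=1..CARD('n). r i *\<^sub>R v i)"
        using real_span[OF nb tpos order_refl hv suppn] by blast
      have "(\<Sum>i=1..CARD('n). r i *\<^sub>R v i) \<in> span ?B"
        by (intro span_sum span_scale span_base) auto
      then show "z \<in> span ?B" using r by simp
    qed
    have finB: "finite ?B" by simp
    have c1: "card {1..CARD('n)} = CARD('n)" by simp
    have cardle: "card ?B \<le> CARD('n)" using card_image_le[OF finite_atLeastAtMost, of v 1 "CARD('n)"] unfolding c1 .
    have dimU: "dim (UNIV :: (real ^ 'n) set) = CARD('n)" by simp
    have indB: "independent ?B"
      by (rule card_le_dim_spanning[OF subset_UNIV spanB finB]) (unfold dimU, rule cardle)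
    have "dim (UNIV :: (real ^ 'n) set) \<le> card ?B"
      by (rule span_card_ge_dim[OF subset_UNIV spanB finB])
    then have cardB: "card ?B = CARD('n)" using cardle dimU by simp
    have Leq: "L = {(\<Sum>s=1..CARD('n). of_int (c s) *\<^sub>R v s) | c :: nat \<Rightarrow> int. True}"
    proof
      show "L \<subseteq> {(\<Sum>s=1..CARD('n). of_int (c s) *\<^sub>R v s) | c :: nat \<Rightarrow> int. True}"
      proof
        fix z assume "z \<in> L"
        then obtain c :: "nat \<Rightarrow> int" where "z = (\<Sum>i=1..CARD('n). of_int (c i) *\<^sub>R v i)"
          using int_span[OF lb nb tpos tG order_refl hv _ suppn] by blast
        then show "z \<in> {(\<Sum>s=1..CARD('n). of_int (c s) *\<^sub>R v s) | c :: nat \<Rightarrow> int. True}" by blast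
      qed
    next
      show "{(\<Sum>s=1..CARD('n). of_int (c s) *\<^sub>R v s) | c :: nat \<Rightarrow> int. True} \<subseteq> L"
      proof
        fix z assume "z \<in> {(\<Sum>s=1..CARD('n). of_int (c s) *\<^sub>R v s) | c :: nat \<Rightarrow> int. True}"
        then obtain c :: "nat \<Rightarrow> int" where c: "z = (\<Sum>s=1..CARD('n). of_int (c s) *\<^sub>R v s)" by blast
        have "(\<Sum>s=1..CARD('n). of_int (c s) *\<^sub>R v s) \<in> L"
          by (rule lb_sum[OF lb]) (use hv in \<open>auto simp: Hv_def\<close>)
        then show "z \<in> L" using c by simp
      qed
    qed
    have "lattice_basis L v" unfolding lattice_basis_def using cardB indB Leq by blast
    moreover have "\<forall>s\<in>{1..CARD('n)}. norm (v s) \<le> Kc ^ CARD('n) * succ_min L s"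
    proof
      fix s assume s: "s \<in> {1..CARD('n)}"
      have "Kc ^ s \<le> Kc ^ CARD('n)" using s Kc1 by (intro power_increasing) auto
      then have "Kc ^ s * succ_min L s \<le> Kc ^ CARD('n) * succ_min L s"
        using succ_min_props(1)[OF lb s] by (intro mult_right_mono) auto
      then show "norm (v s) \<le> Kc ^ CARD('n) * succ_min L s" using nv s by (meson order_trans)
    qed
    moreover have "\<forall>s\<in>{1..<CARD('n)}. nz_idx (v s) \<subseteq> nz_idx (v (s + 1))" using zv by simp
    ultimately show ?thesis by blast
  qed
  moreover have "Kc ^ CARD('n) > 0" using Kc1 by simp
  ultimately show ?thesis by blast
qed

end
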